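(* Let $G$ be a graph and let $v_1,\dots,v_6$ be pairwise distinct vertices of $G$ such that $v_2v_3,v_4v_5,v_6v_1$ are edges and $v_1v_2,v_3v_4,v_5v_6$ are non-edges of $G$ (an $AP_6$). Assume that no two of the edges $v_2v_3,v_4v_5,v_6v_1$ are in conflict. Then $v_3v_6,v_4v_1,v_5v_2$ are edges of $G$, and $v_4v_5$ is in conflict with $v_3v_6$, $v_2v_3$ is in conflict with $v_4v_1$, and $v_6v_1$ is in conflict with $v_5v_2$.
   Context: Two edges $e,e'$ of a graph are in conflict if there are vertices $w_1,w_2,w_3,w_4$ (not necessarily distinct) with $e=w_2w_3$, $e'=w_4w_1$ and $w_1w_2$, $w_3w_4$ non-edges (i.e. the four vertices build an alternating cycle $AC_4$). *)

theory Defs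
  imports Main
begin

definition simple_graph :: "('a \<Rightarrow> 'a \<Rightarrow> bool) \<Rightarrow> bool" where
  "simple_graph E \<longleftrightarrow> (\<forall>u v. E u v \<longrightarrow> E v u) \<and> (\<forall>v. \<not> E v v)"

text \<open>The (unordered) edges ab and cd are in conflict if there are vertices
w1..w4 (not necessarily distinct) with ab = w2w3, cd = w4w1 and w1w2, w3w4
non-edges.\<close>

definition in_conflict :: "('a \<Rightarrow> 'a \<Rightarrow> bool) \<Rightarrow> 'a \<times> 'a \<Rightarrow> 'a \<times> 'a \<Rightarrow> bool" where
  "in_conflict E e e' \<longleftrightarrow>
     (\<exists>w1 w2 w3 w4. {w2, w3} = {fst e, snd e} \<and> {w4, w1} = {fst e', snd e'}
        \<and> \<not> E w1 w2 \<and> \<not> E w3 w4)"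

end

theory Submission
  imports Defs
begin

lemma conf_swap: "in_conflict E (a,b) (c,d) \<Longrightarrow> in_conflict E (b,a) (d,c)"
  unfolding in_conflict_def by (auto simp: insert_commute)

lemma conf_swap1: "in_conflict E (a,b) (c,d) \<Longrightarrow> in_conflict E (b,a) (c,d)"
  unfolding in_conflict_def by (auto simp: insert_commute)
lemma conf_swap2: "in_conflict E (a,b) (c,d) \<Longrightarrow> in_conflict E (a,b) (d,c)"
  unfolding in_conflict_def by (auto simp: insert_commute)

lemma conf_intro: "\<not> E w1 w2 \<Longrightarrow> \<not> E w3 w4 \<Longrightarrow> in_conflict E (w2, w3) (w4, w1)"
  unfolding in_conflict_def by auto

theorem lemma2:
  fixes E :: "'a \<Rightarrow> 'a \<Rightarrow> bool" and v1 v2 v3 v4 v5 v6 :: 'a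
  assumes "simple_graph E"
    and "distinct [v1, v2, v3, v4, v5, v6]"
    and "E v2 v3" and "E v4 v5" and "E v6 v1"
    and "\<not> E v1 v2" and "\<not> E v3 v4" and "\<not> E v5 v6"
    and "\<not> in_conflict E (v2, v3) (v4, v5)"
    and "\<not> in_conflict E (v2, v3) (v6, v1)"
    and "\<not> in_conflict E (v4, v5) (v6, v1)"
  shows "E v3 v6 \<and> E v4 v1 \<and> E v5 v2 \<and>
         in_conflict E (v4, v5) (v3, v6) \<and>
         in_conflict E (v2, v3) (v4, v1) \<and>
         in_conflict E (v6, v1) (v5, v2)"
proof -
  have s: "\<And>u v. E u v \<Longrightarrow> E v u" using assms(1) unfolding simple_graph_def by blast
  have c: "\<And>a b c d w1 w2 w3 w4. \<not> in_conflict E (a,b) (c,d) \<Longrightarrow> {w2,w3} = {a,b} \<Longrightarrow> {w4,w1} = {c,d}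
     \<Longrightarrow> \<not> E w3 w4 \<Longrightarrow> E w1 w2"
    unfolding in_conflict_def by auto
  have h1: "E v5 v2" using c[OF assms(9), of v2 v3 v4 v5] assms(7) by auto
  have h2: "E v6 v3" using c[OF assms(10), of v3 v2 v1 v6] assms(6) s by (auto simp: insert_commute)
  have h3: "E v1 v4" using c[OF assms(11), of v4 v5 v6 v1] assms(8) by auto
  have n1: "\<not> E v6 v5" "\<not> E v4 v3" "\<not> E v2 v1" using assms(6-8) s by blast+
  show ?thesis using h1 h2 h3 s n1 assms(6-8)
      conf_intro[of E v6 v5 v4 v3] conf_intro[of E v1 v2 v3 v4] conf_intro[of E v5 v6 v1 v2]
    by (meson conf_swap conf_swap1 conf_swap2)
qed

end
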